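(* Let $\alpha,\beta>0$ with $\alpha+\beta<\pi$, and let $I_{\alpha,\beta}$ be the single-vertex crease pattern (the "generalized igloo") with six creases $c_1,\dots,c_6$ emanating from a vertex in counterclockwise order, whose sector angles are: $\alpha$ between $c_1,c_2$; $\beta$ between $c_2,c_3$; $\pi-\alpha-\beta$ between $c_3,c_4$; $\pi-\alpha-\beta$ between $c_4,c_5$; $\beta$ between $c_5,c_6$; $\alpha$ between $c_6,c_1$. Consider rigid folded states with folding angle symmetry $(\rho_1,\rho_2,\rho_3,\rho_4,\rho_3,\rho_2)$ (crease $c_i$ has folding angle $\rho_i$ for $i\le 4$, $c_5$ has $\rho_3$, $c_6$ has $\rho_2$). Then $I_{\alpha,\beta}$ is a 2-DOF rigid origami, and its configuration space is given by $$\tan\frac{\rho_1}{2} =\frac{\sin\alpha\sin\beta\sin(\alpha+\beta)\cos\rho_3+\cos\beta\big(\sin\alpha\cos(\alpha+\beta)-\cos\alpha\sin(\alpha+\beta)\cos\rho_2\cos\rho_3\big)+\cos\alpha\big(\sin\beta\cos(\alpha+\beta)\cos\rho_2+\sin(\alpha+\beta)\sin\rho_2\sin\rho_3\big)}{\sin\beta\cos(\alpha+\beta)\sin\rho_2 - \sin(\alpha+\beta)\big(\cos\beta\sin\rho_2\cos\rho_3+\cos\rho_2\sin\rho_3\big)}$$ and $$\tan\frac{\rho_4}{2} =\frac{\cos^2\alpha\, \sin(2(\alpha+\beta))\sin^2\frac{\rho_3}{2}+\sin\alpha \cos(\alpha+\beta)\Big(2\sin\alpha \sin(\alpha+\beta)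 \cos\rho_2 \sin^2\frac{\rho_3}{2}- \sin\alpha\cos\alpha(\cos\rho_2-1)\big(\cos^2(\alpha+\beta)\cos\rho_3 + \sin^2(\alpha+\beta)\big)+ \sin\rho_2 \sin\rho_3\Big)}{\sin\alpha \sin\rho_2 \cos\rho_3 \big(\sin\alpha \cos\beta \cos\rho_2 + \cos\alpha \sin\beta\big)\sin\rho_3}.$$
   Context: A crease pattern is a straight-line embedding of a planar graph on a compact region $P$ of the plane; here it has a single interior vertex. A rigid folded state is a continuous map $f:P\to\mathbb{R}^3$ that is an isometry on each face of the crease pattern and whose image has no self-intersections. The folding angle $\rho_i\in[-\pi,\pi]$ of crease $c_i$ is the signed supplement of the dihedral angle between the two faces adjacent to $c_i$ (so $\rho_i=0$ means unfolded, $\rho_i>0$ valley, $\rho_i<0$ mountain). The configuration space is the set of folding-angle vectors realized by rigid folded states; "$k$-DOF" means the configuration space has $k$ degrees of freedom (is $k$-dimensional). *)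

theory Defs
  imports "HOL-Analysis.Analysis"
begin

text \<open>The paper is laid in the
xy-plane with the vertex at the origin and crease c_1 along the positive x-axis;
creases are numbered counterclockwise and theta_i is the sector angle between
c_i and c_(i+1) (indices mod n).  The folding angles rho_i of a rigid folded
state satisfy the loop-closure condition
  R_x(rho_1) R_z(theta_1) R_x(rho_2) R_z(theta_2) ... R_x(rho_n) R_z(theta_n) = I
(Belcastro--Hull), where R_x, R_z are rotations about the x- and z-axes.\<close>

definition rot_x :: "real \<Rightarrow> real^3^3" where
  "rot_x t = vector [vector [1, 0, 0], vector [0, cos t, - sin t], vector [0, sin t, cos t]]"

definition rot_z :: "real \<Rightarrow> real^3^3" where
  "rot_z t = vector [vector [cos t, - sin t, 0], vector [sin t, cos t, 0], vector [0, 0, 1]]"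

definition fold_matrix :: "real list \<Rightarrow> real list \<Rightarrow> real^3^3" where
  "fold_matrix \<theta> \<rho> = foldr (\<lambda>(r, t) M. rot_x r ** rot_z t ** M) (zip \<rho> \<theta>) (mat 1)"

definition config_space :: "real list \<Rightarrow> real list set" where
  "config_space \<theta> = {\<rho>. length \<rho> = length \<theta> \<and> (\<forall>r\<in>set \<rho>. - pi \<le> r \<and> r \<le> pi)
                          \<and> fold_matrix \<theta> \<rho> = mat 1}"

definition igloo_sectors :: "real \<Rightarrow> real \<Rightarrow> real list" where
  "igloo_sectors \<alpha> \<beta> = [\<alpha>, \<beta>, pi - \<alpha> - \<beta>, pi - \<alpha> - \<beta>, \<beta>, \<alpha>]"

end

theory Submission
  imports Defs "HOL-Analysis.Analysis"
begin

lemma rx_e: "rot_x t $1$1 = 1" "rot_x t $1$2 = 0" "rot_x t $1$3 = 0"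
  "rot_x t $2$1 = 0" "rot_x t $2$2 = cos t" "rot_x t $2$3 = - sin t"
  "rot_x t $3$1 = 0" "rot_x t $3$2 = sin t" "rot_x t $3$3 = cos t"
  by (simp_all add: rot_x_def)
lemma rz_e: "rot_z t $1$1 = cos t" "rot_z t $1$2 = - sin t" "rot_z t $1$3 = 0"
  "rot_z t $2$1 = sin t" "rot_z t $2$2 = cos t" "rot_z t $2$3 = 0"
  "rot_z t $3$1 = 0" "rot_z t $3$2 = 0" "rot_z t $3$3 = 1"
  by (simp_all add: rot_z_def)

definition sgm :: "real^3^3" where
  "sgm = vector [vector [1, 0, 0], vector [0, -1, 0], vector [0, 0, 1]]"
lemma sg_e: "sgm $1$1 = 1" "sgm $1$2 = 0" "sgm $1$3 = 0"
  "sgm $2$1 = 0" "sgm $2$2 = -1" "sgm $2$3 = 0"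
  "sgm $3$1 = 0" "sgm $3$2 = 0" "sgm $3$3 = 1"
  by (simp_all add: sgm_def)

lemma mat1_e: "(mat 1 :: real^3^3) $i$j = (if i = j then 1 else 0)"
  by (simp add: mat_def)

lemma mm_e: "((A::real^3^3) ** B) $i$j = A$i$1 * B$1$j + A$i$2 * B$2$j + A$i$3 * B$3$j"
  by (simp add: matrix_matrix_mult_def sum_3)

lemma m3_eq: "(A::real^3^3) = B \<longleftrightarrow> (A$1$1 = B$1$1 \<and> A$1$2 = B$1$2 \<and> A$1$3 = B$1$3 \<and>
   A$2$1 = B$2$1 \<and> A$2$2 = B$2$2 \<and> A$2$3 = B$2$3 \<and> A$3$1 = B$3$1 \<and> A$3$2 = B$3$2 \<and> A$3$3 = B$3$3)"
  by (simp add: vec_eq_iff forall_3)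

lemma rx_add: "rot_x a ** rot_x b = rot_x (a + b)"
  by (simp add: m3_eq mm_e rx_e cos_add sin_add)
lemma rz_add: "rot_z a ** rot_z b = rot_z (a + b)"
  by (simp add: m3_eq mm_e rz_e cos_add sin_add)
lemma rx_0: "rot_x 0 = mat 1" by (simp add: m3_eq rx_e mat1_e)
lemma rz_0: "rot_z 0 = mat 1" by (simp add: m3_eq rz_e mat1_e)
lemma sg_sg: "sgm ** sgm = mat 1" by (simp add: m3_eq mm_e sg_e mat1_e)
lemma sg_rx: "sgm ** rot_x t ** sgm = rot_x (-t)" by (simp add: m3_eq mm_e sg_e rx_e)
lemma sg_rz: "sgm ** rot_z t ** sgm = rot_z (-t)" by (simp add: m3_eq mm_e sg_e rz_e)
lemma tr_rx: "transpose (rot_x t) = rot_x (-t)" by (simp add: m3_eq transpose_def rx_e)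
lemma tr_rz: "transpose (rot_z t) = rot_z (-t)" by (simp add: m3_eq transpose_def rz_e)
lemma orth_rx: "orthogonal_matrix (rot_x t)"
  unfolding orthogonal_matrix_def tr_rx by (simp add: rx_add rx_0)
lemma orth_rz: "orthogonal_matrix (rot_z t)"
  unfolding orthogonal_matrix_def tr_rz by (simp add: rz_add rz_0)
lemma sg_conj: "sgm ** (A ** B) ** sgm = (sgm ** A ** sgm) ** (sgm ** B ** sgm)"
proof -
  have "(sgm ** A ** sgm) ** (sgm ** B ** sgm) = sgm ** A ** (sgm ** sgm) ** B ** sgm"
    by (simp add: matrix_mul_assoc)
  then show ?thesis by (simp add: sg_sg matrix_mul_assoc)
qed

lemma trQ: "transpose (rot_z g ** rot_x r3 ** rot_z be ** rot_x r2 ** rot_z al) =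
   sgm ** (rot_z al ** rot_x r2 ** rot_z be ** rot_x r3 ** rot_z g) ** sgm"
proof -
  have 1: "transpose (rot_z g ** rot_x r3 ** rot_z be ** rot_x r2 ** rot_z al) =
     rot_z (-al) ** (rot_x (-r2) ** (rot_z (-be) ** (rot_x (-r3) ** rot_z (-g))))"
    by (simp only: matrix_transpose_mul tr_rx tr_rz)
  have 2: "sgm ** (rot_z al ** rot_x r2 ** rot_z be ** rot_x r3 ** rot_z g) ** sgm =
     rot_z (-al) ** rot_x (-r2) ** rot_z (-be) ** rot_x (-r3) ** rot_z (-g)"
    by (simp only: sg_conj sg_rx sg_rz)
  show ?thesis unfolding 1 2 by (simp only: matrix_mul_assoc)
qed
lemma orthQ: "orthogonal_matrix (rot_z g ** rot_x r3 ** rot_z be ** rot_x r2 ** rot_z al)"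
  by (intro orthogonal_matrix_mul orth_rx orth_rz)

lemma orthR: "orthogonal_matrix (rot_x a ** (rot_z al ** rot_x r2 ** rot_z be ** rot_x r3 ** rot_z g) ** rot_x b)"
  by (intro orthogonal_matrix_mul orth_rx orth_rz)

lemma mul_orth_eq1: assumes "orthogonal_matrix (Q::real^3^3)"
  shows "A ** Q = mat 1 \<longleftrightarrow> A = transpose Q"
proof
  assume h: "A ** Q = mat 1"
  have "A = A ** (Q ** transpose Q)" using assms by (simp add: orthogonal_matrix_def)
  also have "\<dots> = transpose Q" by (simp add: matrix_mul_assoc h)
  finally show "A = transpose Q" .
next
  assume "A = transpose Q" then show "A ** Q = mat 1" using assms by (simp add: orthogonal_matrix_def)
qed

lemma half_step:
  fixes P :: "real^3^3"
  shows "rot_x (2*a) ** P ** rot_x (2*b) = sgm ** P ** sgm \<longleftrightarrow>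
     rot_x a ** P ** rot_x b = sgm ** (rot_x a ** P ** rot_x b) ** sgm"
proof -
  have c: "sgm ** (rot_x a ** P ** rot_x b) ** sgm = rot_x (-a) ** (sgm ** P ** sgm) ** rot_x (-b)"
    by (simp only: sg_conj sg_rx)
  have g: "rot_x u ** (rot_x v ** S ** rot_x w) ** rot_x z = rot_x (u + v) ** S ** rot_x (w + z)" for u v w z S
  proof -
    have "rot_x u ** (rot_x v ** S ** rot_x w) ** rot_x z = (rot_x u ** rot_x v) ** S ** (rot_x w ** rot_x z)"
      by (simp only: matrix_mul_assoc)
    then show ?thesis by (simp only: rx_add)
  qed
  have e1: "rot_x (-a) ** (rot_x (2*a) ** P ** rot_x (2*b)) ** rot_x (-b) = rot_x a ** P ** rot_x b"
    unfolding g by (simp add: algebra_simps)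
  have e2: "rot_x a ** (rot_x (-a) ** S ** rot_x (-b)) ** rot_x b = S" for S
    unfolding g by (simp add: rx_0)
  have e3: "rot_x a ** (rot_x a ** P ** rot_x b) ** rot_x b = rot_x (2*a) ** P ** rot_x (2*b)"
    unfolding g by (simp add: algebra_simps)
  show ?thesis
  proof
    assume h: "rot_x (2*a) ** P ** rot_x (2*b) = sgm ** P ** sgm"
    show "rot_x a ** P ** rot_x b = sgm ** (rot_x a ** P ** rot_x b) ** sgm"
      unfolding c h[symmetric] e1 ..
  next
    assume h: "rot_x a ** P ** rot_x b = sgm ** (rot_x a ** P ** rot_x b) ** sgm"
    have "rot_x (2*a) ** P ** rot_x (2*b) = rot_x a ** (rot_x a ** P ** rot_x b) ** rot_x b"
      using e3 by simp
    also have "\<dots> = rot_x a ** (rot_x (-a) ** (sgm ** P ** sgm) ** rot_x (-b)) ** rot_x b"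
      using h c by simp
    also have "\<dots> = sgm ** P ** sgm" by (rule e2)
    finally show "rot_x (2*a) ** P ** rot_x (2*b) = sgm ** P ** sgm" .
  qed
qed
lemma sym_iff: "(R::real^3^3) = sgm ** R ** sgm \<longleftrightarrow> R$1$2 = 0 \<and> R$2$1 = 0 \<and> R$2$3 = 0 \<and> R$3$2 = 0"
  by (simp add: m3_eq mm_e sg_e)

lemma tr_e: "transpose (A::real^3^3) $ i $ j = A $ j $ i"
  by (simp add: Finite_Cartesian_Product.transpose_def)
lemma orth_red:
  assumes o: "orthogonal_matrix (R::real^3^3)" and h12: "R$1$2 = 0" and h21: "R$2$1 = 0" and h31: "R$3$1 \<noteq> 0"
  shows "R$2$3 = 0 \<and> R$3$2 = 0"
proof -
  have a: "transpose R ** R = mat 1" and b: "R ** transpose R = mat 1" using o by (auto simp: orthogonal_matrix_def)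
  have "(transpose R ** R)$1$2 = 0" unfolding a by (simp add: mat1_e)
  then have "R$3$1 * R$3$2 = 0" unfolding mm_e tr_e h12 h21 by simp
  then have r32: "R$3$2 = 0" using h31 by simp
  have "(transpose R ** R)$2$2 = 1" unfolding a by (simp add: mat1_e)
  then have q1: "R$2$2 * R$2$2 = 1" unfolding mm_e tr_e h12 r32 by simp
  have "(R ** transpose R)$2$2 = 1" unfolding b by (simp add: mat1_e)
  then have "R$2$3 * R$2$3 = 0" unfolding mm_e tr_e h21 q1 by simp
  then show ?thesis using r32 by simp
qed
lemma fold_eq:
  "fold_matrix (igloo_sectors al be) [r1, r2, r3, r4, r3, r2] =
   rot_x r1 ** (rot_z al ** rot_x r2 ** rot_z be ** rot_x r3 ** rot_z (pi - al - be)) ** rot_x r4 **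
   (rot_z (pi - al - be) ** rot_x r3 ** rot_z be ** rot_x r2 ** rot_z al)"
  by (simp add: fold_matrix_def igloo_sectors_def matrix_mul_assoc)
lemma P21: assumes "cos g = - cos (al+be)" "sin g = sin (al+be)"
  shows "(rot_z al ** rot_x r2 ** rot_z be ** rot_x r3 ** rot_z g)$2$1 =
   - (sin al * sin be * sin (al + be) * cos r3
               + cos be * (sin al * cos (al + be) - cos al * sin (al + be) * cos r2 * cos r3)
               + cos al * (sin be * cos (al + be) * cos r2 + sin (al + be) * sin r2 * sin r3))"
  by (simp add: mm_e rx_e rz_e assms algebra_simps)
lemma P31: assumes "cos g = - cos (al+be)" "sin g = sin (al+be)"
  shows "(rot_z al ** rot_x r2 ** rot_z be ** rot_x r3 ** rot_z g)$3$1 =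
   - (sin be * cos (al + be) * sin r2
                 - sin (al + be) * (cos be * sin r2 * cos r3 + cos r2 * sin r3))"
  by (simp add: mm_e rx_e rz_e assms algebra_simps)
lemma P13: shows "(rot_z al ** rot_x r2 ** rot_z be ** rot_x r3 ** rot_z g)$1$3 =
   sin al * sin r2 * cos r3
                 + (sin al * cos be * cos r2 + cos al * sin be) * sin r3"
  by (simp add: mm_e rx_e rz_e algebra_simps)
lemma poly12:
  fixes sa ca sb cb sd cd sp cp sq cq h :: real
  assumes "sa^2 + ca^2 = 1" "sd^2 + cd^2 = 1" "2 * h^2 = 1 - cq"
    "sb = sd * ca - cd * sa" "cb = cd * ca + sd * sa"
  shows "ca * cq * sb * cd + cp * sa * sb * sd + cb * cp * cq * sa * cd - ca * cb * sd - sa * sp * sq * cd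
   = - (ca^2 * (2 * sd * cd) * h^2 + sa * cd * (2 * sa * sd * cp * h^2 + sp * sq)
       - sa * ca * (cp - 1) * (cd^2 * cq + sd^2))"
  using assms by algebra

lemma P12: assumes "cos g = - cos (al+be)" "sin g = sin (al+be)"
  shows "(rot_z al ** rot_x r2 ** rot_z be ** rot_x r3 ** rot_z g)$1$2 =
   cos al * cos r3 * sin be * cos (al+be) + cos r2 * sin al * sin be * sin (al+be)
   + cos be * cos r2 * cos r3 * sin al * cos (al+be) - cos al * cos be * sin (al+be)
   - sin al * sin r2 * sin r3 * cos (al+be)"
  by (simp add: mm_e rx_e rz_e assms algebra_simps)

lemma closure_gen:
  fixes P :: "real^3^3"
  assumes o: "orthogonal_matrix P" and p31: "P$3$1 \<noteq> 0"
  shows "rot_x (2*a) ** P ** rot_x (2*b) = sgm ** P ** sgm \<longleftrightarrow>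
    cos a * P$2$1 - sin a * P$3$1 = 0 \<and> P$1$2 * cos b + P$1$3 * sin b = 0"
proof -
  define R where "R = rot_x a ** P ** rot_x b"
  have oR: "orthogonal_matrix R" unfolding R_def by (intro orthogonal_matrix_mul orth_rx o)
  have r12: "R$1$2 = P$1$2 * cos b + P$1$3 * sin b" unfolding R_def by (simp add: mm_e rx_e algebra_simps)
  have r21: "R$2$1 = cos a * P$2$1 - sin a * P$3$1" unfolding R_def by (simp add: mm_e rx_e algebra_simps)
  have r31: "R$3$1 = sin a * P$2$1 + cos a * P$3$1" unfolding R_def by (simp add: mm_e rx_e algebra_simps)
  have "rot_x (2*a) ** P ** rot_x (2*b) = sgm ** P ** sgm \<longleftrightarrow> R = sgm ** R ** sgm"
    unfolding R_def by (rule half_step)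
  also have "\<dots> \<longleftrightarrow> R$1$2 = 0 \<and> R$2$1 = 0"
  proof
    assume "R = sgm ** R ** sgm" then show "R$1$2 = 0 \<and> R$2$1 = 0" using sym_iff by blast
  next
    assume h: "R$1$2 = 0 \<and> R$2$1 = 0"
    have c: "cos a * P$2$1 = sin a * P$3$1" using h r21 by simp
    have "cos a * R$3$1 = sin a * (cos a * P$2$1) + cos a * cos a * P$3$1" unfolding r31 by (simp add: algebra_simps)
    also have "\<dots> = P$3$1" unfolding c using sin_cos_squared_add[of a] by algebra
    finally have "R$3$1 \<noteq> 0" using p31 by auto
    then have "R$2$3 = 0 \<and> R$3$2 = 0" using orth_red[OF oR] h by blast
    then show "R = sgm ** R ** sgm" using h sym_iff by blast
  qed
  finally show ?thesis using r12 r21 by auto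
qed

theorem theorem4:
  fixes \<alpha> \<beta> \<rho>\<^sub>2 \<rho>\<^sub>3 :: real
  assumes "\<alpha> > 0" and "\<beta> > 0" and "\<alpha> + \<beta> < pi"
    and "- pi \<le> \<rho>\<^sub>2" and "\<rho>\<^sub>2 \<le> pi" and "- pi \<le> \<rho>\<^sub>3" and "\<rho>\<^sub>3 \<le> pi"
    and D1: "sin \<beta> * cos (\<alpha> + \<beta>) * sin \<rho>\<^sub>2
             - sin (\<alpha> + \<beta>) * (cos \<beta> * sin \<rho>\<^sub>2 * cos \<rho>\<^sub>3 + cos \<rho>\<^sub>2 * sin \<rho>\<^sub>3) \<noteq> 0"
    and D4: "sin \<alpha> * sin \<rho>\<^sub>2 * cos \<rho>\<^sub>3
             + (sin \<alpha> * cos \<beta> * cos \<rho>\<^sub>2 + cos \<alpha> * sin \<beta>) * sin \<rho>\<^sub>3 \<noteq> 0"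
  shows "(\<exists>!(\<rho>\<^sub>1, \<rho>\<^sub>4). - pi < \<rho>\<^sub>1 \<and> \<rho>\<^sub>1 < pi \<and> - pi < \<rho>\<^sub>4 \<and> \<rho>\<^sub>4 < pi \<and>
            [\<rho>\<^sub>1, \<rho>\<^sub>2, \<rho>\<^sub>3, \<rho>\<^sub>4, \<rho>\<^sub>3, \<rho>\<^sub>2] \<in> config_space (igloo_sectors \<alpha> \<beta>))
       \<and> (\<forall>\<rho>\<^sub>1 \<rho>\<^sub>4. - pi < \<rho>\<^sub>1 \<and> \<rho>\<^sub>1 < pi \<and> - pi < \<rho>\<^sub>4 \<and> \<rho>\<^sub>4 < pi \<longrightarrow>
           ([\<rho>\<^sub>1, \<rho>\<^sub>2, \<rho>\<^sub>3, \<rho>\<^sub>4, \<rho>\<^sub>3, \<rho>\<^sub>2] \<in> config_space (igloo_sectors \<alpha> \<beta>) \<longleftrightarrow>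
            tan (\<rho>\<^sub>1 / 2) =
              (sin \<alpha> * sin \<beta> * sin (\<alpha> + \<beta>) * cos \<rho>\<^sub>3
               + cos \<beta> * (sin \<alpha> * cos (\<alpha> + \<beta>) - cos \<alpha> * sin (\<alpha> + \<beta>) * cos \<rho>\<^sub>2 * cos \<rho>\<^sub>3)
               + cos \<alpha> * (sin \<beta> * cos (\<alpha> + \<beta>) * cos \<rho>\<^sub>2 + sin (\<alpha> + \<beta>) * sin \<rho>\<^sub>2 * sin \<rho>\<^sub>3))
              / (sin \<beta> * cos (\<alpha> + \<beta>) * sin \<rho>\<^sub>2
                 - sin (\<alpha> + \<beta>) * (cos \<beta> * sin \<rho>\<^sub>2 * cos \<rho>\<^sub>3 + cos \<rho>\<^sub>2 * sin \<rho>\<^sub>3))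
          \<and> tan (\<rho>\<^sub>4 / 2) =
              ((cos \<alpha>)\<^sup>2 * sin (2 * (\<alpha> + \<beta>)) * (sin (\<rho>\<^sub>3 / 2))\<^sup>2
               + sin \<alpha> * cos (\<alpha> + \<beta>) *
                   (2 * sin \<alpha> * sin (\<alpha> + \<beta>) * cos \<rho>\<^sub>2 * (sin (\<rho>\<^sub>3 / 2))\<^sup>2 + sin \<rho>\<^sub>2 * sin \<rho>\<^sub>3)
               - sin \<alpha> * cos \<alpha> * (cos \<rho>\<^sub>2 - 1) * ((cos (\<alpha> + \<beta>))\<^sup>2 * cos \<rho>\<^sub>3 + (sin (\<alpha> + \<beta>))\<^sup>2))
              / (sin \<alpha> * sin \<rho>\<^sub>2 * cos \<rho>\<^sub>3
                 + (sin \<alpha> * cos \<beta> * cos \<rho>\<^sub>2 + cos \<alpha> * sin \<beta>) * sin \<rho>\<^sub>3)))"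
proof -
  define P where "P = rot_z \<alpha> ** rot_x \<rho>\<^sub>2 ** rot_z \<beta> ** rot_x \<rho>\<^sub>3 ** rot_z (pi - \<alpha> - \<beta>)"
  define N1 where "N1 = sin \<alpha> * sin \<beta> * sin (\<alpha> + \<beta>) * cos \<rho>\<^sub>3
               + cos \<beta> * (sin \<alpha> * cos (\<alpha> + \<beta>) - cos \<alpha> * sin (\<alpha> + \<beta>) * cos \<rho>\<^sub>2 * cos \<rho>\<^sub>3)
               + cos \<alpha> * (sin \<beta> * cos (\<alpha> + \<beta>) * cos \<rho>\<^sub>2 + sin (\<alpha> + \<beta>) * sin \<rho>\<^sub>2 * sin \<rho>\<^sub>3)"
  define E1 where "E1 = sin \<beta> * cos (\<alpha> + \<beta>) * sin \<rho>\<^sub>2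
                 - sin (\<alpha> + \<beta>) * (cos \<beta> * sin \<rho>\<^sub>2 * cos \<rho>\<^sub>3 + cos \<rho>\<^sub>2 * sin \<rho>\<^sub>3)"
  define N4 where "N4 = (cos \<alpha>)\<^sup>2 * sin (2 * (\<alpha> + \<beta>)) * (sin (\<rho>\<^sub>3 / 2))\<^sup>2
               + sin \<alpha> * cos (\<alpha> + \<beta>) *
                   (2 * sin \<alpha> * sin (\<alpha> + \<beta>) * cos \<rho>\<^sub>2 * (sin (\<rho>\<^sub>3 / 2))\<^sup>2 + sin \<rho>\<^sub>2 * sin \<rho>\<^sub>3)
               - sin \<alpha> * cos \<alpha> * (cos \<rho>\<^sub>2 - 1) * ((cos (\<alpha> + \<beta>))\<^sup>2 * cos \<rho>\<^sub>3 + (sin (\<alpha> + \<beta>))\<^sup>2)"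
  define E4 where "E4 = sin \<alpha> * sin \<rho>\<^sub>2 * cos \<rho>\<^sub>3
                 + (sin \<alpha> * cos \<beta> * cos \<rho>\<^sub>2 + cos \<alpha> * sin \<beta>) * sin \<rho>\<^sub>3"
  have e1: "E1 \<noteq> 0" using D1 unfolding E1_def .
  have e4: "E4 \<noteq> 0" using D4 unfolding E4_def .
  have cg: "cos (pi - \<alpha> - \<beta>) = - cos (\<alpha> + \<beta>)" and sg: "sin (pi - \<alpha> - \<beta>) = sin (\<alpha> + \<beta>)"
    by (simp_all add: diff_diff_eq)
  have p21: "P$2$1 = - N1" unfolding P_def N1_def by (rule P21[OF cg sg])
  have p31: "P$3$1 = - E1" unfolding P_def E1_def by (rule P31[OF cg sg])
  have p13: "P$1$3 = E4" unfolding P_def E4_def by (rule P13)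
  have p12: "P$1$2 = - N4"
  proof -
    have h: "2 * (sin (\<rho>\<^sub>3 / 2))\<^sup>2 = 1 - cos \<rho>\<^sub>3"
      using cos_double_sin[of "\<rho>\<^sub>3 / 2"] by simp
    have sb: "sin \<beta> = sin (\<alpha>+\<beta>) * cos \<alpha> - cos (\<alpha>+\<beta>) * sin \<alpha>"
      using sin_diff[of "\<alpha>+\<beta>" \<alpha>] by simp
    have cb: "cos \<beta> = cos (\<alpha>+\<beta>) * cos \<alpha> + sin (\<alpha>+\<beta>) * sin \<alpha>"
      using cos_diff[of "\<alpha>+\<beta>" \<alpha>] by simp
    have s2: "sin (2 * (\<alpha> + \<beta>)) = 2 * sin (\<alpha>+\<beta>) * cos (\<alpha>+\<beta>)" by (rule sin_double)
    show ?thesis unfolding P_def P12[OF cg sg] N4_def s2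
      using poly12[where sa="sin \<alpha>" and ca="cos \<alpha>" and sd="sin (\<alpha>+\<beta>)" and cd="cos (\<alpha>+\<beta>)"
        and h="sin (\<rho>\<^sub>3 / 2)" and cq="cos \<rho>\<^sub>3" and sb="sin \<beta>" and cb="cos \<beta>"
        and sp="sin \<rho>\<^sub>2" and cp="cos \<rho>\<^sub>2" and sq="sin \<rho>\<^sub>3", OF sin_cos_squared_add sin_cos_squared_add h sb cb]
      by (simp add: algebra_simps)
  qed
  have oP: "orthogonal_matrix P" unfolding P_def by (intro orthogonal_matrix_mul orth_rx orth_rz)
  have p31nz: "P$3$1 \<noteq> 0" using p31 e1 by simp
  have key: "[r1, \<rho>\<^sub>2, \<rho>\<^sub>3, r4, \<rho>\<^sub>3, \<rho>\<^sub>2] \<in> config_space (igloo_sectors \<alpha> \<beta>) \<longleftrightarrow>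
      tan (r1/2) = N1 / E1 \<and> tan (r4/2) = N4 / E4"
    if r: "- pi < r1" "r1 < pi" "- pi < r4" "r4 < pi" for r1 r4
  proof -
    have "[r1, \<rho>\<^sub>2, \<rho>\<^sub>3, r4, \<rho>\<^sub>3, \<rho>\<^sub>2] \<in> config_space (igloo_sectors \<alpha> \<beta>) \<longleftrightarrow>
      fold_matrix (igloo_sectors \<alpha> \<beta>) [r1, \<rho>\<^sub>2, \<rho>\<^sub>3, r4, \<rho>\<^sub>3, \<rho>\<^sub>2] = mat 1"
      using r assms(4-7) by (simp add: config_space_def igloo_sectors_def)
    also have "\<dots> \<longleftrightarrow> rot_x r1 ** P ** rot_x r4 = sgm ** P ** sgm"
      unfolding fold_eq P_def trQ[symmetric] by (rule mul_orth_eq1[OF orthQ])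
    also have "\<dots> \<longleftrightarrow> rot_x (2*(r1/2)) ** P ** rot_x (2*(r4/2)) = sgm ** P ** sgm" by simp
    also have "\<dots> \<longleftrightarrow> cos (r1/2) * P$2$1 - sin (r1/2) * P$3$1 = 0 \<and> P$1$2 * cos (r4/2) + P$1$3 * sin (r4/2) = 0"
      by (rule closure_gen[OF oP p31nz])
    also have "\<dots> \<longleftrightarrow> tan (r1/2) = N1 / E1 \<and> tan (r4/2) = N4 / E4"
    proof -
      have c1: "cos (r1/2) > 0" using r by (intro cos_gt_zero_pi) auto
      have c4: "cos (r4/2) > 0" using r by (intro cos_gt_zero_pi) auto
      have "tan (r1/2) = N1 / E1 \<longleftrightarrow> sin (r1/2) * E1 = N1 * cos (r1/2)"
        unfolding tan_def using c1 e1 by (simp add: frac_eq_eq)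
      moreover have "tan (r4/2) = N4 / E4 \<longleftrightarrow> sin (r4/2) * E4 = N4 * cos (r4/2)"
        unfolding tan_def using c4 e4 by (simp add: frac_eq_eq)
      moreover have "cos (r1/2) * P$2$1 - sin (r1/2) * P$3$1 = 0 \<longleftrightarrow> sin (r1/2) * E1 = N1 * cos (r1/2)"
        unfolding p21 p31 by argo
      moreover have "P$1$2 * cos (r4/2) + P$1$3 * sin (r4/2) = 0 \<longleftrightarrow> sin (r4/2) * E4 = N4 * cos (r4/2)"
        unfolding p12 p13 by argo
      ultimately show ?thesis by blast
    qed
    finally show ?thesis .
  qed
  have part2: "\<forall>r1 r4. - pi < r1 \<and> r1 < pi \<and> - pi < r4 \<and> r4 < pi \<longrightarrow>
      ([r1, \<rho>\<^sub>2, \<rho>\<^sub>3, r4, \<rho>\<^sub>3, \<rho>\<^sub>2] \<in> config_space (igloo_sectors \<alpha> \<beta>) \<longleftrightarrow>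
       tan (r1/2) = N1 / E1 \<and> tan (r4/2) = N4 / E4)"
    using key by blast
  define w1 where "w1 = 2 * arctan (N1 / E1)"
  define w4 where "w4 = 2 * arctan (N4 / E4)"
  have wr: "- pi < w1" "w1 < pi" "- pi < w4" "w4 < pi"
    unfolding w1_def w4_def using arctan_lbound[of "N1/E1"] arctan_ubound[of "N1/E1"] arctan_lbound[of "N4/E4"] arctan_ubound[of "N4/E4"]
    by linarith+
  have wt: "tan (w1/2) = N1 / E1" "tan (w4/2) = N4 / E4"
    unfolding w1_def w4_def by (simp_all add: tan_arctan)
  have part1: "\<exists>!(r1, r4). - pi < r1 \<and> r1 < pi \<and> - pi < r4 \<and> r4 < pi \<and>
            [r1, \<rho>\<^sub>2, \<rho>\<^sub>3, r4, \<rho>\<^sub>3, \<rho>\<^sub>2] \<in> config_space (igloo_sectors \<alpha> \<beta>)"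
  proof (rule ex1I[of _ "(w1, w4)"])
    show "case (w1, w4) of (r1, r4) \<Rightarrow> - pi < r1 \<and> r1 < pi \<and> - pi < r4 \<and> r4 < pi \<and>
            [r1, \<rho>\<^sub>2, \<rho>\<^sub>3, r4, \<rho>\<^sub>3, \<rho>\<^sub>2] \<in> config_space (igloo_sectors \<alpha> \<beta>)"
      using wr wt key[OF wr] by simp
  next
    fix p assume h: "case p of (r1, r4) \<Rightarrow> - pi < r1 \<and> r1 < pi \<and> - pi < r4 \<and> r4 < pi \<and>
            [r1, \<rho>\<^sub>2, \<rho>\<^sub>3, r4, \<rho>\<^sub>3, \<rho>\<^sub>2] \<in> config_space (igloo_sectors \<alpha> \<beta>)"
    obtain x y where p: "p = (x, y)" by (cases p)
    have xr: "- pi < x" "x < pi" "- pi < y" "y < pi" using h p by auto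
    have t: "tan (x/2) = N1 / E1" "tan (y/2) = N4 / E4" using h p key[OF xr] by auto
    have "arctan (tan (x/2)) = x/2" using xr by (intro arctan_tan) auto
    then have "x = w1" unfolding w1_def t by simp
    moreover have "arctan (tan (y/2)) = y/2" using xr by (intro arctan_tan) auto
    then have "y = w4" unfolding w4_def t by simp
    ultimately show "p = (w1, w4)" using p by simp
  qed
  from conjI[OF part1 part2] show ?thesis unfolding N1_def E1_def N4_def E4_def .
qed

end
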